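(* For all integers $q\ge 2$ and $m\ge 1$, the fractal star matrix $M_{q,m}$ is the star matrix of a partition of the hypercube ${\bf Z}_q^{(q^m-1)/(q-1)}$ into $q^m$ subcubes, each of dimension $\frac{q^m-1}{q-1}-m$.
   Context: A subcube of ${\bf Z}_q^n$ is obtained by fixing some coordinates and letting the others run through ${\bf Z}_q$; its star pattern is the vector over ${\bf Z}_q\cup\{*\}$ with the fixed values in fixed coordinates and $*$ in free ones. A matrix over ${\bf Z}_q\cup\{*\}$ is the star matrix of a partition if its rows are the star patterns of the subcubes of a partition of ${\bf Z}_q^n$ (each vector in exactly one subcube). The fractal matrices $M_{q,m}$ are defined recursively: $M_{q,0}$ has one row and zero columns; for $m\ge1$, $M_{q,m}$ consists of $q$ horizontal blocks indexed by $a=0,1,\dots,q-1$, each block having $q^{m-1}$ rows; the first column of $M_{q,m}$ has the entry $a$ in every row of block $a$; the remaining columns are divided into $q$ vertical stripes, each of width equal to the number of columns of $M_{q,m-1}$, and in block $a$ the $a$-th vertical stripe (counting from $0$) is a copy of $M_{q,m-1}$ while all other stripes of block $a$ consist only of $*$. *)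

theory Defs
  imports Main
begin

text \<open>Entries of a star matrix: Some a for a value a in Z_q (a < q), None for the star.
  Vectors of Z_q^n are lists of naturals of length n with entries < q.\<close>

definition zq_vectors :: "nat \<Rightarrow> nat \<Rightarrow> nat list set" where
  "zq_vectors q n = {v. length v = n \<and> (\<forall>x\<in>set v. x < q)}"

definition subcube :: "nat \<Rightarrow> nat option list \<Rightarrow> nat list set" where
  "subcube q p = {v. v \<in> zq_vectors q (length p) \<and>
      (\<forall>i < length p. \<forall>c. p ! i = Some c \<longrightarrow> v ! i = c)}"

definition star_dim :: "nat option list \<Rightarrow> nat" where
  "star_dim p = length (filter (\<lambda>x. x = None) p)"

definition is_partition_star_matrix :: "nat \<Rightarrow> nat \<Rightarrow> nat option list list \<Rightarrow> bool" where
  "is_partition_star_matrix q n M \<longleftrightarrow>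
     (\<forall>p\<in>set M. length p = n \<and> (\<forall>c. Some c \<in> set p \<longrightarrow> c < q)) \<and>
     (\<forall>v\<in>zq_vectors q n. \<exists>!i. i < length M \<and> v \<in> subcube q (M ! i))"

fun fractal_width :: "nat \<Rightarrow> nat \<Rightarrow> nat" where
  "fractal_width q 0 = 0"
| "fractal_width q (Suc m) = 1 + q * fractal_width q m"

fun fractal :: "nat \<Rightarrow> nat \<Rightarrow> nat option list list" where
  "fractal q 0 = [[]]"
| "fractal q (Suc m) =
     concat (map (\<lambda>a. map (\<lambda>r. Some a # concat (map (\<lambda>b. if b = a then r
                 else replicate (fractal_width q m) None) [0..<q])) (fractal q m)) [0..<q])"

end

theory Submission
  imports Defs
begin

definition cmp :: "nat option list \<Rightarrow> nat list \<Rightarrow> bool" where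
  "cmp p v = list_all2 (\<lambda>e x. \<forall>c. e = Some c \<longrightarrow> x = c) p v"

lemma subcube_cmp: "v \<in> subcube q p \<longleftrightarrow> (\<forall>x\<in>set v. x < q) \<and> cmp p v"
  unfolding subcube_def zq_vectors_def cmp_def list_all2_conv_all_nth by auto

lemma cmp_rep: "cmp (replicate n None) v \<longleftrightarrow> length v = n"
  unfolding cmp_def by (induct n arbitrary: v) (auto simp: list_all2_Cons1 length_Suc_conv)

lemma cmp_len: "cmp p v \<Longrightarrow> length v = length p"
  unfolding cmp_def by (simp add: list_all2_lengthD)

lemma cmp_append: "cmp (xs @ ys) zs \<longleftrightarrow> cmp xs (take (length xs) zs) \<and> cmp ys (drop (length xs) zs)"
  unfolding cmp_def
proof
  assume "list_all2 (\<lambda>e x. \<forall>c. e = Some c \<longrightarrow> x = c) (xs @ ys) zs"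
  then show "list_all2 (\<lambda>e x. \<forall>c. e = Some c \<longrightarrow> x = c) xs (take (length xs) zs) \<and>
    list_all2 (\<lambda>e x. \<forall>c. e = Some c \<longrightarrow> x = c) ys (drop (length xs) zs)"
    unfolding list_all2_append1 by auto
next
  assume h: "list_all2 (\<lambda>e x. \<forall>c. e = Some c \<longrightarrow> x = c) xs (take (length xs) zs) \<and>
    list_all2 (\<lambda>e x. \<forall>c. e = Some c \<longrightarrow> x = c) ys (drop (length xs) zs)"
  then have "length (take (length xs) zs) = length xs" "length (drop (length xs) zs) = length ys"
    by (auto dest: list_all2_lengthD)
  then show "list_all2 (\<lambda>e x. \<forall>c. e = Some c \<longrightarrow> x = c) (xs @ ys) zs"
    unfolding list_all2_append1 using h
    by (intro exI[of _ "take (length xs) zs"] exI[of _ "drop (length xs) zs"]) auto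
qed

lemma cmp_stripes:
  assumes "length r = w"
  shows "cmp (concat (map (\<lambda>b. if b = a then r else replicate w None) [0..<k])) u \<longleftrightarrow>
     length u = k * w \<and> (a < k \<longrightarrow> cmp r (take w (drop (a*w) u)))"
proof (induct k arbitrary: u)
  case 0
  then show ?case unfolding cmp_def by auto
next
  case (Suc k)
  have L: "length (concat (map (\<lambda>b. if b = a then r else replicate w None) [0..<k])) = k * w"
    by (induct k) (auto simp: assms)
  show ?case
  proof (cases "k = a")
    case True
    then have na: "\<not> a < k" by simp
    have "cmp (concat (map (\<lambda>b. if b = a then r else replicate w None) [0..<Suc k])) u \<longleftrightarrow>
      length (take (k*w) u) = k * w \<and> cmp r (drop (k*w) u)"
      using na by (simp add: cmp_append L[unfolded True] Suc[unfolded True] True)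
    also have "\<dots> \<longleftrightarrow> length u = Suc k * w \<and> cmp r (take w (drop (k*w) u))"
    proof
      assume h: "length (take (k*w) u) = k * w \<and> cmp r (drop (k*w) u)"
      then have "length (drop (k*w) u) = w" using cmp_len assms by blast
      then show "length u = Suc k * w \<and> cmp r (take w (drop (k*w) u))" using h by auto
    next
      assume h: "length u = Suc k * w \<and> cmp r (take w (drop (k*w) u))"
      then have t: "take w (drop (k*w) u) = drop (k*w) u" by simp
      have c: "cmp r (drop (k*w) u)" using h unfolding t by blast
      have "k*w \<le> length u" using h by simp
      then show "length (take (k*w) u) = k * w \<and> cmp r (drop (k*w) u)" using c by (simp add: min_def)
    qed
    finally show ?thesis using True by simp
  next
    case False
    show ?thesis
    proof (cases "a < k")
      case True
      have "length u = Suc k * w \<Longrightarrow> take w (drop (a*w) (take (k*w) u)) = take w (drop (a*w) u)"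
      proof -
        have "a * w + w \<le> k * w" using True
          by (metis Suc_leI add.commute mult_Suc mult_le_mono1)
        then show ?thesis by (simp add: take_drop min_def)
      qed
      then show ?thesis using False True
        apply (simp add: cmp_append L Suc cmp_rep)
        apply (auto simp: cmp_rep)
        done
    next
      case F2: False
      then have "\<not> a < Suc k" using False by simp
      then show ?thesis using F2 False
        by (simp add: cmp_append L Suc cmp_rep) auto
    qed
  qed
qed


definition row :: "nat \<Rightarrow> nat \<Rightarrow> nat \<Rightarrow> nat option list \<Rightarrow> nat option list" where
  "row q w a r = Some a # concat (map (\<lambda>b. if b = a then r else replicate w None) [0..<q])"

lemma fractal_Suc: "fractal q (Suc m) = concat (map (\<lambda>a. map (row q (fractal_width q m) a) (fractal q m)) [0..<q])"
  by (simp add: row_def[abs_def])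

lemma sum_if_ge: "k \<le> a \<Longrightarrow> sum_list (map (\<lambda>b. if b = a then s else t) [0..<k]) = k * (t::nat)"
  by (induct k) auto

lemma sum_if_lt: "a < k \<Longrightarrow> sum_list (map (\<lambda>b. if b = a then s else t) [0..<k]) + t = s + k * (t::nat)"
proof (induct k)
  case 0 then show ?case by simp
next
  case (Suc k)
  show ?case
  proof (cases "a < k")
    case True then show ?thesis using Suc by simp
  next
    case False then have "a = k" using Suc by simp
    then show ?thesis using sum_if_ge[of k a s t] by simp
  qed
qed

lemma len_stripes: "length r = w \<Longrightarrow> length (concat (map (\<lambda>b. if b = a then r else replicate w None) [0..<k])) = k * w"
  by (induct k) auto

lemma row_len: "length r = w \<Longrightarrow> length (row q w a r) = 1 + q * w"
  unfolding row_def by (simp add: len_stripes)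

lemma row_mem: "v \<in> zq_vectors q (1 + q * w) \<Longrightarrow> a < q \<Longrightarrow> length r = w \<Longrightarrow>
   v \<in> subcube q (row q w a r) \<longleftrightarrow> hd v = a \<and> take w (drop (1 + a*w) v) \<in> subcube q r"
proof -
  assume v: "v \<in> zq_vectors q (1 + q * w)" and a: "a < q" and r: "length r = w"
  obtain x u where xu: "v = x # u" using v unfolding zq_vectors_def by (cases v) auto
  have lu: "length u = q * w" and uq: "\<forall>y\<in>set u. y < q" and xq: "x < q"
    using v xu unfolding zq_vectors_def by auto
  have "v \<in> subcube q (row q w a r) \<longleftrightarrow> x = a \<and> cmp r (take w (drop (a*w) u))"
    unfolding subcube_cmp row_def xu using lu uq xq a
    by (auto simp: cmp_def cmp_stripes[OF r, unfolded cmp_def])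
  moreover have "\<forall>y\<in>set (take w (drop (a*w) u)). y < q" using uq
    by (meson in_set_dropD in_set_takeD)
  ultimately show ?thesis unfolding subcube_cmp xu by simp
qed

lemma width_le: "q \<ge> 1 \<Longrightarrow> m \<le> fractal_width q m"
proof (induct m)
  case 0 then show ?case by simp
next
  case (Suc m)
  have a: "1 * fractal_width q m \<le> q * fractal_width q m" using Suc.prems by (intro mult_le_mono1)
  have b: "m \<le> fractal_width q m" using Suc by simp
  show ?case unfolding fractal_width.simps using a b by linarith
qed

lemma width_formula: "fractal_width q m * (q - 1) = q ^ m - 1"
proof (induct m)
  case 0 then show ?case by simp
next
  case (Suc m)
  show ?case
  proof (cases "q = 0")
    case True then show ?thesis by simp
  next
    case False
    then have p: "q ^ m \<ge> 1" "q \<ge> 1" by auto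
    have "q * 1 \<le> q * q ^ m" using p by (intro mult_le_mono2)
    then have p2: "q \<le> q ^ Suc m" by simp
    have "fractal_width q (Suc m) * (q - 1) = (q - 1) + q * (fractal_width q m * (q - 1))"
      by (simp add: algebra_simps)
    also have "\<dots> = (q - 1) + q * (q ^ m - 1)" using Suc by simp
    also have "\<dots> = (q - 1) + (q ^ Suc m - q)" by (simp add: diff_mult_distrib2)
    also have "\<dots> = q ^ Suc m - 1" using p p2 by linarith
    finally show ?thesis .
  qed
qed

lemma props:
  assumes q: "q \<ge> 1"
  shows "length (fractal q m) = q ^ m \<and>
    (\<forall>p\<in>set (fractal q m). length p = fractal_width q m \<and> (\<forall>c. Some c \<in> set p \<longrightarrow> c < q)
       \<and> star_dim p = fractal_width q m - m) \<and>
    (\<forall>v\<in>zq_vectors q (fractal_width q m). length (filter (\<lambda>p. v \<in> subcube q p) (fractal q m)) = 1)"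
proof (induct m)
  case 0
  have "\<forall>v\<in>zq_vectors q 0. v \<in> subcube q []" unfolding zq_vectors_def subcube_def by auto
  then show ?case by (simp add: star_dim_def)
next
  case (Suc m)
  define w where "w = fractal_width q m"
  define L where "L = fractal q m"
  have IH1: "length L = q ^ m" and IH2: "\<forall>p\<in>set L. length p = w \<and> (\<forall>c. Some c \<in> set p \<longrightarrow> c < q)
       \<and> star_dim p = w - m"
    and IH3: "\<forall>v\<in>zq_vectors q w. length (filter (\<lambda>p. v \<in> subcube q p) L) = 1"
    using Suc unfolding w_def L_def by auto
  have F: "fractal q (Suc m) = concat (map (\<lambda>a. map (row q w a) L) [0..<q])"
    unfolding w_def L_def by (rule fractal_Suc)
  have W: "fractal_width q (Suc m) = 1 + q * w" unfolding w_def by simp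
  have len: "length (fractal q (Suc m)) = q ^ Suc m"
    unfolding F by (simp add: length_concat IH1 comp_def sum_list_triv)
  have rows: "\<forall>p\<in>set (fractal q (Suc m)). length p = fractal_width q (Suc m) \<and> (\<forall>c. Some c \<in> set p \<longrightarrow> c < q)
       \<and> star_dim p = fractal_width q (Suc m) - Suc m"
  proof
    fix p assume "p \<in> set (fractal q (Suc m))"
    then obtain a r where a: "a < q" and r: "r \<in> set L" and p: "p = row q w a r"
      unfolding F by auto
    have lr: "length r = w" and rc: "\<forall>c. Some c \<in> set r \<longrightarrow> c < q" and sr: "star_dim r = w - m"
      using IH2 r by auto
    have "length p = 1 + q * w" using row_len[OF lr] p by simp
    then have "length p = fractal_width q (Suc m)" by (simp only: W)
    moreover have "\<forall>c. Some c \<in> set p \<longrightarrow> c < q"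
    proof (intro allI impI)
      fix c assume "Some c \<in> set p"
      then have "Some c = Some a \<or> Some c \<in> set (concat (map (\<lambda>b. if b = a then r else replicate w None) [0..<q]))"
        unfolding p row_def by simp
      then have "c = a \<or> Some c \<in> set r"
      proof
        assume "Some c \<in> set (concat (map (\<lambda>b. if b = a then r else replicate w None) [0..<q]))"
        then have "Some c \<in> (if \<not> a < q then {} else set r) \<or> Some c \<in> (if {0..<q} \<inter> {x. x \<noteq> a} = {} then {} else set (replicate w None))"
          by simp
        then show ?thesis by (auto split: if_splits)
      qed simp
      then show "c < q" using a rc by blast
    qed
    moreover have "star_dim p = fractal_width q (Suc m) - Suc m"
    proof -
      have e: "map (\<lambda>b. length (filter (\<lambda>x. x = None) (if b = a then r else replicate w None))) [0..<q]
          = map (\<lambda>b. if b = a then star_dim r else w) [0..<q]"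
        by (auto simp: star_dim_def filter_replicate)
      have "star_dim p = sum_list (map (\<lambda>b. if b = a then star_dim r else w) [0..<q])"
        unfolding p row_def star_dim_def
        by (simp add: filter_concat length_concat comp_def e[unfolded star_dim_def])
      moreover have "m \<le> w" unfolding w_def using width_le q by simp
      ultimately show ?thesis unfolding W using sum_if_lt[OF a, of "star_dim r" w] sr by linarith
    qed
    ultimately show "length p = fractal_width q (Suc m) \<and> (\<forall>c. Some c \<in> set p \<longrightarrow> c < q)
       \<and> star_dim p = fractal_width q (Suc m) - Suc m" by blast
  qed
  have part: "\<forall>v\<in>zq_vectors q (fractal_width q (Suc m)). length (filter (\<lambda>p. v \<in> subcube q p) (fractal q (Suc m))) = 1"
  proof
    fix v assume v0: "v \<in> zq_vectors q (fractal_width q (Suc m))"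
    then have v: "v \<in> zq_vectors q (1 + q * w)" by (simp only: W)
    have hv: "hd v < q" using v unfolding zq_vectors_def by (cases v) auto
    have blk: "length (filter (\<lambda>p. v \<in> subcube q p) (map (row q w a) L)) = (if a = hd v then 1 else 0)"
      if a: "a < q" for a
    proof -
      have ch: "take w (drop (1 + a*w) v) \<in> zq_vectors q w"
      proof -
        have "1 + a * w + w \<le> 1 + q * w" using a
        proof -
          have "Suc a * w \<le> q * w" using a by (intro mult_le_mono1) simp
          then show ?thesis by simp
        qed
        then show ?thesis using v unfolding zq_vectors_def
          by (auto dest: in_set_dropD in_set_takeD)
      qed
      have "length (filter (\<lambda>p. v \<in> subcube q p) (map (row q w a) L))
          = length (filter (\<lambda>r. hd v = a \<and> take w (drop (1 + a*w) v) \<in> subcube q r) L)"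
      proof -
        have "\<And>r. r \<in> set L \<Longrightarrow> (v \<in> subcube q (row q w a r)) = (hd v = a \<and> take w (drop (1 + a*w) v) \<in> subcube q r)"
          using row_mem[OF v a] IH2 by blast
        then have "filter (\<lambda>r. v \<in> subcube q (row q w a r)) L = filter (\<lambda>r. hd v = a \<and> take w (drop (1 + a*w) v) \<in> subcube q r) L"
          by (rule filter_cong[OF refl])
        then show ?thesis unfolding filter_map length_map comp_def by simp
      qed
      also have "\<dots> = (if a = hd v then 1 else 0)"
      proof (cases "a = hd v")
        case True then show ?thesis using IH3 ch by simp
      next
        case False then show ?thesis by simp
      qed
      finally show ?thesis .
    qed
    have "length (filter (\<lambda>p. v \<in> subcube q p) (fractal q (Suc m)))
        = sum_list (map (\<lambda>a. length (filter (\<lambda>p. v \<in> subcube q p) (map (row q w a) L))) [0..<q])"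
      unfolding F by (simp add: filter_concat length_concat comp_def)
    also have "\<dots> = sum_list (map (\<lambda>a. if a = hd v then 1 else 0) [0..<q])"
    proof (rule arg_cong[where f=sum_list], rule map_cong[OF refl])
      fix a assume "a \<in> set [0..<q]"
      then have "a < q" by simp
      then show "length (filter (\<lambda>p. v \<in> subcube q p) (map (row q w a) L)) = (if a = hd v then 1 else 0)"
        by (rule blk)
    qed
    also have "\<dots> = 1" using sum_if_lt[OF hv, of 1 0] by simp
    finally show "length (filter (\<lambda>p. v \<in> subcube q p) (fractal q (Suc m))) = 1" .
  qed
  show ?case using len rows part by blast
qed

lemma filter1: "length (filter P xs) = 1 \<Longrightarrow> \<exists>!i. i < length xs \<and> P (xs ! i)"
proof -
  assume "length (filter P xs) = 1"
  then have "card {i. i < length xs \<and> P (xs ! i)} = 1" by (simp add: length_filter_conv_card)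
  then obtain j where "{i. i < length xs \<and> P (xs ! i)} = {j}" by (auto simp: card_1_singleton_iff)
  then show ?thesis by (metis (mono_tags, lifting) insertI1 mem_Collect_eq singletonD)
qed

theorem mainTheorem7:
  fixes q m :: nat
  assumes "q \<ge> 2" and "m \<ge> 1"
  shows "is_partition_star_matrix q ((q ^ m - 1) div (q - 1)) (fractal q m) \<and>
         length (fractal q m) = q ^ m \<and>
         (\<forall>p\<in>set (fractal q m). star_dim p = (q ^ m - 1) div (q - 1) - m)"
proof -
  have wf: "(q ^ m - 1) div (q - 1) = fractal_width q m"
    proof -
    have "q - 1 > 0" using assms(1) by simp
    then show ?thesis using width_formula[of q m] by (metis nonzero_mult_div_cancel_right less_irrefl)
  qed
  have P: "length (fractal q m) = q ^ m \<and>
    (\<forall>p\<in>set (fractal q m). length p = fractal_width q m \<and> (\<forall>c. Some c \<in> set p \<longrightarrow> c < q)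
       \<and> star_dim p = fractal_width q m - m) \<and>
    (\<forall>v\<in>zq_vectors q (fractal_width q m). length (filter (\<lambda>p. v \<in> subcube q p) (fractal q m)) = 1)"
    using props assms(1) by simp
  have A: "\<forall>v\<in>zq_vectors q (fractal_width q m). \<exists>!i. i < length (fractal q m) \<and> v \<in> subcube q (fractal q m ! i)"
    using P filter1 by blast
  have B: "\<forall>p\<in>set (fractal q m). length p = fractal_width q m \<and> (\<forall>c. Some c \<in> set p \<longrightarrow> c < q)"
    using P by blast
  have C: "\<forall>p\<in>set (fractal q m). star_dim p = fractal_width q m - m" using P by blast
  show ?thesis unfolding wf is_partition_star_matrix_def using A B C P by blast
qed

end
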